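(* Assume $\theta_{12}=\theta_{34}=1$. Let $U\in M_{n\times k}(\tilde{\mathcal A})$ satisfy $U^*U=1_k$, put $Q=1-UU^*$, and consider the connection $\nabla_j=\partial_j+A_j$, $A_j=U^*\partial_jU$ ($j=1,\dots,4$), with curvature $F_{mn}=\partial_mA_n-\partial_nA_m+[A_m,A_n]$. Then the anti-self-duality equations $$F_{12}=-F_{34},\qquad F_{13}=F_{24},\qquad F_{14}=-F_{23}$$ are equivalent to the single equation $$U^*\big[-3p_0^*Qp_0+p_1^*Qp_1+p_2^*Qp_2+p_3^*Qp_3\big]U=0,$$ where $p_0=\tfrac12\sigma_1\hat x_1-\tfrac12\sigma_2\hat x_2-\tfrac12\sigma_3\hat x_3+\tfrac i2\hat x_4$, $p_1=\tfrac1{\sqrt2}\sigma_1\hat x_1-\tfrac{i}{\sqrt2}\hat x_4$, $p_2=\tfrac1{\sqrt6}\sigma_1\hat x_1+\sqrt{\tfrac23}\,\sigma_2\hat x_2+\tfrac{i}{\sqrt6}\hat x_4$, $p_3=\tfrac1{2\sqrt3}\sigma_1\hat x_1-\tfrac1{2\sqrt3}\sigma_2\hat x_2+\tfrac{\sqrt3}{2}\sigma_3\hat x_3+\tfrac{i}{2\sqrt3}\hat x_4$, $\sigma_1,\sigma_2,\sigma_3$ are the Pauli matrices, and in this equation $U,U^*,Q$ stand for $U\otimes\mathrm{Id}_2$, $U^*\otimes\mathrm{Id}_2$, $Q\otimes\mathrm{Id}_2$ (the $\hat x_i$ acting diagonally on all matrix indices).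
   Context: $\hat x_1,\dots,\hat x_4$ are the canonical self-adjoint operators on $L^2(\mathbb R^2)$ with $[\hat x_1,\hat x_2]=i\theta_{12}$, $[\hat x_3,\hat x_4]=i\theta_{34}$ and all other commutators zero. $\mathcal A$ is one of the operator algebras $\mathcal S$, $\Gamma^m_\rho$, $\mathcal K^\infty$ (Weyl quantizations of the Schwartz space, of a symbol class with $m<0$, and of smooth functions with all derivatives vanishing at infinity), $\tilde{\mathcal A}$ its unitization. Derivations act entrywise on matrices by $\partial_1 f=\frac{i}{\theta_{12}}[\hat x_2,f]$, $\partial_2 f=-\frac{i}{\theta_{12}}[\hat x_1,f]$, $\partial_3f=\frac{i}{\theta_{34}}[\hat x_4,f]$, $\partial_4f=-\frac{i}{\theta_{34}}[\hat x_3,f]$. Pauli matrices: $\sigma_1=\begin{pmatrix}0&1\\1&0\end{pmatrix}$, $\sigma_2=\begin{pmatrix}0&-i\\i&0\end{pmatrix}$, $\sigma_3=\begin{pmatrix}1&0\\0&-1\end{pmatrix}$. *)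

theory Defs
  imports Complex_Main
begin

text \<open>Matrices with entries in an (operator) algebra are represented as functions
  nat \<Rightarrow> nat \<Rightarrow> 'a; all dimensions are carried explicitly.\<close>

type_synonym 'a mat = "nat \<Rightarrow> nat \<Rightarrow> 'a"

definition mmul :: "nat \<Rightarrow> 'a::ring_1 mat \<Rightarrow> 'a mat \<Rightarrow> 'a mat" where
  "mmul m A B = (\<lambda>i j. \<Sum>l<m. A i l * B l j)"

definition madd :: "'a::ring_1 mat \<Rightarrow> 'a mat \<Rightarrow> 'a mat" where
  "madd A B = (\<lambda>i j. A i j + B i j)"

definition msub :: "'a::ring_1 mat \<Rightarrow> 'a mat \<Rightarrow> 'a mat" where
  "msub A B = (\<lambda>i j. A i j - B i j)"

definition mneg :: "'a::ring_1 mat \<Rightarrow> 'a mat" where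
  "mneg A = (\<lambda>i j. - A i j)"

definition madj :: "('a \<Rightarrow> 'a) \<Rightarrow> 'a mat \<Rightarrow> 'a mat" where
  "madj st A = (\<lambda>i j. st (A j i))"

definition mid :: "'a::ring_1 mat" where
  "mid = (\<lambda>i j. if i = j then 1 else 0)"

text \<open>diagonal matrix a \<cdot> Id (an operator acting diagonally on matrix indices)\<close>
definition dg :: "'a::ring_1 \<Rightarrow> 'a mat" where
  "dg a = (\<lambda>i j. if i = j then a else 0)"

definition meq :: "nat \<Rightarrow> nat \<Rightarrow> 'a mat \<Rightarrow> 'a mat \<Rightarrow> bool" where
  "meq r s A B \<longleftrightarrow> (\<forall>i<r. \<forall>j<s. A i j = B i j)"

text \<open>Abstract complex unital *-algebra: c embeds the complex scalars (centrally),
  st is the adjoint operation.\<close>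
definition star_alg :: "(complex \<Rightarrow> 'a::ring_1) \<Rightarrow> ('a \<Rightarrow> 'a) \<Rightarrow> bool" where
  "star_alg c st \<longleftrightarrow>
     (\<forall>z w. c (z + w) = c z + c w) \<and> (\<forall>z w. c (z * w) = c z * c w) \<and> c 1 = 1 \<and>
     (\<forall>z a. c z * a = a * c z) \<and>
     (\<forall>a b. st (a + b) = st a + st b) \<and> (\<forall>a b. st (a * b) = st b * st a) \<and>
     (\<forall>a. st (st a) = a) \<and> (\<forall>z. st (c z) = c (cnj z))"

definition comm :: "'a::ring_1 \<Rightarrow> 'a \<Rightarrow> 'a" where
  "comm a b = a * b - b * a"

definition coords :: "(complex \<Rightarrow> 'a::ring_1) \<Rightarrow> ('a \<Rightarrow> 'a) \<Rightarrow> (nat \<Rightarrow> 'a) \<Rightarrow> bool" where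
  "coords c st x \<longleftrightarrow>
     (\<forall>j\<in>{1..4}. st (x j) = x j) \<and>
     comm (x 1) (x 2) = c \<i> \<and> comm (x 3) (x 4) = c \<i> \<and>
     comm (x 1) (x 3) = 0 \<and> comm (x 1) (x 4) = 0 \<and>
     comm (x 2) (x 3) = 0 \<and> comm (x 2) (x 4) = 0"

definition der :: "(complex \<Rightarrow> 'a::ring_1) \<Rightarrow> (nat \<Rightarrow> 'a) \<Rightarrow> nat \<Rightarrow> 'a \<Rightarrow> 'a" where
  "der c x j f =
     (if j = 1 then c \<i> * comm (x 2) f
      else if j = 2 then - (c \<i> * comm (x 1) f)
      else if j = 3 then c \<i> * comm (x 4) f
      else - (c \<i> * comm (x 3) f))"

definition mder :: "(complex \<Rightarrow> 'a::ring_1) \<Rightarrow> (nat \<Rightarrow> 'a) \<Rightarrow> nat \<Rightarrow> 'a mat \<Rightarrow> 'a mat" where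
  "mder c x j M = (\<lambda>a b. der c x j (M a b))"

definition gpot :: "(complex \<Rightarrow> 'a::ring_1) \<Rightarrow> ('a \<Rightarrow> 'a) \<Rightarrow> (nat \<Rightarrow> 'a) \<Rightarrow> nat \<Rightarrow> 'a mat \<Rightarrow> nat \<Rightarrow> 'a mat" where
  "gpot c st x n U j = mmul n (madj st U) (mder c x j U)"

definition curv :: "(complex \<Rightarrow> 'a::ring_1) \<Rightarrow> ('a \<Rightarrow> 'a) \<Rightarrow> (nat \<Rightarrow> 'a) \<Rightarrow> nat \<Rightarrow> nat \<Rightarrow> 'a mat \<Rightarrow> nat \<Rightarrow> nat \<Rightarrow> 'a mat" where
  "curv c st x n k U m l =
     madd (msub (mder c x m (gpot c st x n U l)) (mder c x l (gpot c st x n U m)))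
          (msub (mmul k (gpot c st x n U m) (gpot c st x n U l))
                (mmul k (gpot c st x n U l) (gpot c st x n U m)))"

text \<open>Pauli matrices (index 0 = identity), indices 0,1\<close>
definition pauli :: "nat \<Rightarrow> complex mat" where
  "pauli a = (\<lambda>s t.
     if a = 0 then (if s = t then 1 else 0)
     else if a = 1 then (if s = t then 0 else 1)
     else if a = 2 then (if s = t then 0 else if s = 0 then - \<i> else \<i>)
     else (if s = t then (if s = 0 then 1 else -1) else 0))"

text \<open>p_r = a_r1 sigma1 x1 + a_r2 sigma2 x2 + a_r3 sigma3 x3 + a_r4 Id x4;
  pcoef r mu is the complex coefficient of x mu, pmat r is the 2x2 operator matrix\<close>
definition pcoef :: "nat \<Rightarrow> nat \<Rightarrow> complex" where
  "pcoef r mu =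
     (if r = 0 then (if mu = 1 then 1/2 else if mu = 2 then -1/2 else if mu = 3 then -1/2 else \<i>/2)
      else if r = 1 then (if mu = 1 then 1 / of_real (sqrt 2) else if mu = 2 then 0 else if mu = 3 then 0
                          else - \<i> / of_real (sqrt 2))
      else if r = 2 then (if mu = 1 then 1 / of_real (sqrt 6) else if mu = 2 then of_real (sqrt (2/3))
                          else if mu = 3 then 0 else \<i> / of_real (sqrt 6))
      else (if mu = 1 then 1 / (2 * of_real (sqrt 3)) else if mu = 2 then - 1 / (2 * of_real (sqrt 3))
            else if mu = 3 then of_real (sqrt 3) / 2 else \<i> / (2 * of_real (sqrt 3))))"

definition pmat :: "(complex \<Rightarrow> 'a::ring_1) \<Rightarrow> (nat \<Rightarrow> 'a) \<Rightarrow> nat \<Rightarrow> 'a mat" where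
  "pmat c x r = (\<lambda>s t. \<Sum>mu\<in>{1..4}. c (pcoef r mu * pauli (if mu = 4 then 0 else mu) s t) * x mu)"

text \<open>Block (s,t) (s,t < 2) of the 2k x 2k matrix
  (U* (x) Id2) [ -3 p0* (Q(x)Id2) p0 + p1* (Q(x)Id2) p1 + p2* .. + p3* .. ] (U (x) Id2),
  where Q = 1 - U U* (n x n) and the entries of p_r act diagonally on the n indices.\<close>
definition asd_block :: "(complex \<Rightarrow> 'a::ring_1) \<Rightarrow> ('a \<Rightarrow> 'a) \<Rightarrow> (nat \<Rightarrow> 'a) \<Rightarrow> nat \<Rightarrow> nat \<Rightarrow> 'a mat \<Rightarrow> nat \<Rightarrow> nat \<Rightarrow> 'a mat" where
  "asd_block c st x n k U s t =
     (let Q = msub mid (mmul k U (madj st U));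
          w = (\<lambda>r::nat. if r = 0 then -3 else (1::complex));
          inner = (\<lambda>i j. \<Sum>r<4. \<Sum>u<2.
                     c (w r) * mmul n (mmul n (dg (st (pmat c x r u s))) Q) (dg (pmat c x r u t)) i j)
      in mmul n (mmul n (madj st U) inner) U)"

end

theory Submission
  imports Defs
begin


locale SA =
  fixes c :: "complex \<Rightarrow> 'a::ring_1" and st :: "'a \<Rightarrow> 'a"
  assumes sa: "star_alg c st"
begin
lemma c_add: "c (z+w) = c z + c w" using sa unfolding star_alg_def by blast
lemma c_mult: "c (z*w) = c z * c w" using sa unfolding star_alg_def by blast
lemma c_one: "c 1 = 1" using sa unfolding star_alg_def by blast
lemma c_central: "c z * a = a * c z" using sa unfolding star_alg_def by blast
lemma st_add: "st (a+b) = st a + st b" using sa unfolding star_alg_def by blast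
lemma st_mult: "st (a*b) = st b * st a" using sa unfolding star_alg_def by blast
lemma st_st: "st (st a) = a" using sa unfolding star_alg_def by blast
lemma st_c: "st (c z) = c (cnj z)" using sa unfolding star_alg_def by blast
lemma c_zero: "c 0 = 0" using c_add[of 0 0] by simp
lemma c_neg: "c (-z) = - c z"
proof -
  have "c (-z) + c z = 0" using c_add[of "-z" z] c_zero by simp
  thus ?thesis by (simp add: eq_neg_iff_add_eq_0)
qed
lemma c_diff: "c (z-w) = c z - c w" using c_add[of z "-w"] c_neg by simp
lemma c_sum: "c (sum f A) = (\<Sum>i\<in>A. c (f i))"
  by (induction A rule: infinite_finite_induct) (simp_all add: c_zero c_add)
lemma st_zero: "st 0 = 0" using st_add[of 0 0] by simp
lemma st_neg: "st (-a) = - st a"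
proof -
  have "st (-a) + st a = 0" using st_add[of "-a" a] st_zero by simp
  thus ?thesis by (simp add: eq_neg_iff_add_eq_0)
qed
lemma st_diff: "st (a-b) = st a - st b" using st_add[of a "-b"] st_neg by simp
lemma st_sum: "st (sum f A) = (\<Sum>i\<in>A. st (f i))"
  by (induction A rule: infinite_finite_induct) (simp_all add: st_zero st_add)
lemma c_ii: "c \<i> * c \<i> = -1" using c_mult[of \<i> \<i>] c_neg[of 1] c_one by simp
lemma c_lc: "a * (c z * b) = c z * (a * b)"
proof -
  have "a * (c z * b) = (a * c z) * b" by (simp add: mult.assoc)
  also have "\<dots> = (c z * a) * b" using c_central[of z a] by simp
  finally show ?thesis by (simp add: mult.assoc)
qed
lemma c_mm: "(c z * a) * (c w * b) = c (z*w) * (a * b)"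
proof -
  have "(c z*a)*(c w*b) = c z * (a * (c w * b))" by (simp add: mult.assoc)
  also have "\<dots> = c z * (c w * (a*b))" using c_lc[of a w b] by simp
  finally show ?thesis by (simp add: c_mult mult.assoc)
qed
end

locale SAX = SA c st for c :: "complex \<Rightarrow> 'a::ring_1" and st +
  fixes x :: "nat \<Rightarrow> 'a" and n k :: nat and U :: "'a mat"
  assumes co: "coords c st x" and on: "meq k k (mmul n (madj st U) U) mid"
begin

definition Bm :: "'a \<Rightarrow> 'a mat" where
  "Bm \<alpha> a b = (\<Sum>l<n. st (U l a) * \<alpha> * U l b)"

lemma orth: "a < k \<Longrightarrow> b < k \<Longrightarrow> (\<Sum>l<n. st (U l a) * U l b) = (if a = b then 1 else 0)"
  using on by (simp add: meq_def mmul_def madj_def mid_def)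

definition yy :: "nat \<Rightarrow> 'a" where
  "yy j = (if j = 1 then x 2 else if j = 2 then - x 1 else if j = 3 then x 4 else - x 3)"

lemma der_yy: "der c x j f = c \<i> * comm (yy j) f"
  by (simp add: der_def yy_def comm_def algebra_simps)

lemma gpot_eq: assumes "a < k" "b < k"
  shows "gpot c st x n U j a b = c \<i> * (Bm (yy j) a b - (if a = b then yy j else 0))"
proof -
  have "gpot c st x n U j a b = (\<Sum>l<n. st (U l a) * (c \<i> * (yy j * U l b - U l b * yy j)))"
    by (simp add: gpot_def mmul_def madj_def mder_def der_yy comm_def)
  also have "\<dots> = (\<Sum>l<n. c \<i> * (st (U l a) * yy j * U l b - st (U l a) * U l b * yy j))"
    by (simp add: c_lc right_diff_distrib mult.assoc)
  also have "\<dots> = c \<i> * (Bm (yy j) a b - (\<Sum>l<n. st (U l a) * U l b) * yy j)"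
    by (simp add: Bm_def sum_distrib_right sum_distrib_left sum_subtractf right_diff_distrib)
  also have "\<dots> = c \<i> * (Bm (yy j) a b - (if a = b then yy j else 0))"
    using orth[OF assms] by simp
  finally show ?thesis .
qed


definition G :: "nat \<Rightarrow> 'a mat" where
  "G j a b = Bm (yy j) a b - (if a = b then yy j else 0)"

lemma comm_c: "comm y (c z * g) = c z * comm y g"
proof -
  have "y * (c z * g) = c z * (y * g)" by (rule c_lc)
  moreover have "(c z*g)*y = c z*(g*y)" by (rule mult.assoc)
  ultimately show ?thesis by (simp add: comm_def right_diff_distrib)
qed

lemma der_c: "der c x j (c z * g) = c z * der c x j g"
  unfolding der_yy comm_c by (rule c_lc)

lemma cm1: "c (-1) = -1" using c_neg[of 1] c_one by simp

lemma der_gpot: assumes "a < k" "b < k"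
  shows "der c x m (gpot c st x n U l a b) = - comm (yy m) (G l a b)"
proof -
  have "der c x m (gpot c st x n U l a b) = c \<i> * (c \<i> * comm (yy m) (G l a b))"
    by (simp add: gpot_eq[OF assms] G_def der_yy comm_c)
  also have "\<dots> = - comm (yy m) (G l a b)" by (simp add: mult.assoc[symmetric] c_ii)
  finally show ?thesis .
qed

lemma prod_gpot: assumes "a < k" "b < k"
  shows "(\<Sum>q<k. gpot c st x n U m a q * gpot c st x n U l q b) = - (\<Sum>q<k. G m a q * G l q b)"
proof -
  have "(\<Sum>q<k. gpot c st x n U m a q * gpot c st x n U l q b) = (\<Sum>q<k. c (\<i>*\<i>) * (G m a q * G l q b))"
    by (rule sum.cong) (simp_all add: gpot_eq assms G_def c_mm)
  thus ?thesis by (simp add: cm1 sum_negf)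
qed


definition cmk :: "'a mat \<Rightarrow> 'a mat \<Rightarrow> 'a mat" where
  "cmk A B a b = (\<Sum>q<k. A a q * B q b - B a q * A q b)"

lemma sdl: fixes f :: "nat \<Rightarrow> 'a" shows "b < k \<Longrightarrow> (\<Sum>q<k. f q * (if q = b then z else 0)) = f b * z"
proof -
  assume b: "b < k"
  have "(\<Sum>q<k. f q * (if q = b then z else 0)) = (\<Sum>q<k. if q = b then f q * z else 0)"
    by (rule sum.cong) auto
  thus ?thesis using b by simp
qed

lemma sdr: fixes f :: "nat \<Rightarrow> 'a" shows "a < k \<Longrightarrow> (\<Sum>q<k. (if a = q then y else 0) * f q) = y * f a"
proof -
  assume a: "a < k"
  have "(\<Sum>q<k. (if a = q then y else 0) * f q) = (\<Sum>q<k. if a = q then y * f q else 0)"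
    by (rule sum.cong) auto
  thus ?thesis using a by simp
qed

lemma sdd: fixes y :: 'a shows "a < k \<Longrightarrow> (\<Sum>q<k. (if a = q then y else 0) * (if q = b then z else 0)) = (if a = b then y * z else 0)"
proof -
  assume a: "a < k"
  have "(\<Sum>q<k. (if a = q then y else 0) * (if q = b then z else 0)) = (\<Sum>q<k. if a = q then (if q = b then y * z else 0) else 0)"
    by (rule sum.cong) auto
  thus ?thesis using a by simp
qed

lemma GG: assumes "a < k" "b < k"
  shows "(\<Sum>q<k. G m a q * G l q b) = (\<Sum>q<k. Bm (yy m) a q * Bm (yy l) q b)
     - Bm (yy m) a b * yy l - yy m * Bm (yy l) a b + (if a = b then yy m * yy l else 0)"
proof -
  have "(\<Sum>q<k. G m a q * G l q b) = (\<Sum>q<k. Bm (yy m) a q * Bm (yy l) q b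
     - Bm (yy m) a q * (if q = b then yy l else 0) - (if a = q then yy m else 0) * Bm (yy l) q b
     + (if a = q then yy m else 0) * (if q = b then yy l else 0))"
    by (rule sum.cong) (simp_all add: G_def algebra_simps)
  also have "\<dots> = (\<Sum>q<k. Bm (yy m) a q * Bm (yy l) q b)
     - Bm (yy m) a b * yy l - yy m * Bm (yy l) a b + (if a = b then yy m * yy l else 0)"
    apply (simp only: sum.distrib sum_subtractf sdl[OF assms(2)] sdr[OF assms(1)] sdd[OF assms(1)])
    by simp
  finally show ?thesis .
qed

lemma curv_eq: assumes "a < k" "b < k"
  shows "curv c st x n k U m l a b = (if a = b then comm (yy m) (yy l) else 0) - cmk (Bm (yy m)) (Bm (yy l)) a b"
proof -
  have "curv c st x n k U m l a b = - comm (yy m) (G l a b) + comm (yy l) (G m a b)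
      - (\<Sum>q<k. G m a q * G l q b) + (\<Sum>q<k. G l a q * G m q b)"
    by (simp add: curv_def madd_def msub_def mmul_def mder_def der_gpot[OF assms] prod_gpot[OF assms])
  also have "\<dots> = (if a = b then comm (yy m) (yy l) else 0) - cmk (Bm (yy m)) (Bm (yy l)) a b"
    unfolding GG[OF assms] cmk_def sum_subtractf
    by (cases "a = b") (simp_all add: G_def comm_def algebra_simps)
  finally show ?thesis .
qed

end

context SAX begin

definition T :: "'a mat \<Rightarrow> 'a mat" where
  "T \<phi> a b = (\<Sum>l2<n. (\<Sum>l1<n. st (U l1 a) * \<phi> l1 l2) * U l2 b)"

lemma T_cong: "(\<And>l1 l2. l1 < n \<Longrightarrow> l2 < n \<Longrightarrow> \<phi> l1 l2 = \<psi> l1 l2) \<Longrightarrow> T \<phi> a b = T \<psi> a b"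
  unfolding T_def by (intro sum.cong refl arg_cong2[where f="(*)"]) auto

lemma T_sum: "T (\<lambda>l1 l2. \<Sum>i\<in>I. f i l1 l2) a b = (\<Sum>i\<in>I. T (f i) a b)"
proof -
  have "T (\<lambda>l1 l2. \<Sum>i\<in>I. f i l1 l2) a b = (\<Sum>l2<n. \<Sum>l1<n. \<Sum>i\<in>I. st (U l1 a) * f i l1 l2 * U l2 b)"
    by (simp add: T_def sum_distrib_left sum_distrib_right)
  also have "\<dots> = (\<Sum>l2<n. \<Sum>i\<in>I. \<Sum>l1<n. st (U l1 a) * f i l1 l2 * U l2 b)"
    by (rule sum.cong[OF refl], rule sum.swap)
  also have "\<dots> = (\<Sum>i\<in>I. \<Sum>l2<n. \<Sum>l1<n. st (U l1 a) * f i l1 l2 * U l2 b)"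
    by (rule sum.swap)
  also have "\<dots> = (\<Sum>i\<in>I. T (f i) a b)"
    by (simp add: T_def sum_distrib_left sum_distrib_right)
  finally show ?thesis .
qed

lemma T_c: "T (\<lambda>l1 l2. c z * \<phi> l1 l2) a b = c z * T \<phi> a b"
proof -
  have h: "(\<Sum>l1<n. st (U l1 a) * (c z * \<phi> l1 l2)) = c z * (\<Sum>l1<n. st (U l1 a) * \<phi> l1 l2)" for l2
    by (simp add: c_lc sum_distrib_left)
  show ?thesis by (simp only: T_def h mult.assoc flip: sum_distrib_left)
qed

lemma T_sand: assumes "a < k" "b < k"
  shows "T (\<lambda>l1 l2. \<alpha> * ((if l1 = l2 then 1 else 0) - (\<Sum>q<k. U l1 q * st (U l2 q))) * \<beta>) a b
     = Bm (\<alpha> * \<beta>) a b - (\<Sum>q<k. Bm \<alpha> a q * Bm \<beta> q b)"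
proof -
  have e: "\<alpha> * ((if l1 = l2 then 1 else 0) - (\<Sum>q<k. U l1 q * st (U l2 q))) * \<beta>
     = (if l1 = l2 then \<alpha> * \<beta> else 0) - (\<Sum>q<k. \<alpha> * U l1 q * st (U l2 q) * \<beta>)" for l1 l2
    by (simp add: algebra_simps sum_distrib_left sum_distrib_right)
  have p1: "(\<Sum>l2<n. (\<Sum>l1<n. st (U l1 a) * (if l1 = l2 then \<alpha> * \<beta> else 0)) * U l2 b) = Bm (\<alpha> * \<beta>) a b"
  proof -
    have "(\<Sum>l1<n. st (U l1 a) * (if l1 = l2 then \<alpha> * \<beta> else 0)) = (if l2 < n then st (U l2 a) * (\<alpha> * \<beta>) else 0)" for l2
    proof -
      have "(\<Sum>l1<n. st (U l1 a) * (if l1 = l2 then \<alpha> * \<beta> else 0)) = (\<Sum>l1<n. if l1 = l2 then st (U l1 a) * (\<alpha> * \<beta>) else 0)"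
        by (rule sum.cong) auto
      thus ?thesis by simp
    qed
    thus ?thesis by (simp add: Bm_def mult.assoc)
  qed
  have p2: "(\<Sum>l2<n. (\<Sum>l1<n. st (U l1 a) * (\<Sum>q<k. \<alpha> * U l1 q * st (U l2 q) * \<beta>)) * U l2 b)
      = (\<Sum>q<k. Bm \<alpha> a q * Bm \<beta> q b)"
  proof -
    have "(\<Sum>l2<n. (\<Sum>l1<n. st (U l1 a) * (\<Sum>q<k. \<alpha> * U l1 q * st (U l2 q) * \<beta>)) * U l2 b)
        = (\<Sum>l2<n. \<Sum>l1<n. \<Sum>q<k. (st (U l1 a) * \<alpha> * U l1 q) * (st (U l2 q) * \<beta> * U l2 b))"
      by (simp add: sum_distrib_left sum_distrib_right mult.assoc)
    also have "\<dots> = (\<Sum>l2<n. \<Sum>q<k. \<Sum>l1<n. (st (U l1 a) * \<alpha> * U l1 q) * (st (U l2 q) * \<beta> * U l2 b))"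
      by (rule sum.cong[OF refl], rule sum.swap)
    also have "\<dots> = (\<Sum>q<k. \<Sum>l2<n. \<Sum>l1<n. (st (U l1 a) * \<alpha> * U l1 q) * (st (U l2 q) * \<beta> * U l2 b))"
      by (rule sum.swap)
    also have "\<dots> = (\<Sum>q<k. Bm \<alpha> a q * Bm \<beta> q b)"
      by (simp add: Bm_def sum_distrib_left sum_distrib_right)
    finally show ?thesis .
  qed
  show ?thesis
    unfolding T_def e by (simp only: right_diff_distrib sum_subtractf left_diff_distrib p1 p2)
qed

end


lemma dgQdg: fixes Q :: "'a::ring_1 mat" assumes "i < N" "j < N"
  shows "mmul N (mmul N (dg \<alpha>) Q) (dg \<beta>) i j = \<alpha> * Q i j * \<beta>"
proof -
  have 1: "mmul N (dg \<alpha>) Q i l = \<alpha> * Q i l" for l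
  proof -
    have "mmul N (dg \<alpha>) Q i l = (\<Sum>l'<N. if i = l' then \<alpha> * Q l' l else 0)"
      unfolding mmul_def dg_def by (rule sum.cong) auto
    thus ?thesis using assms by simp
  qed
  have "mmul N (mmul N (dg \<alpha>) Q) (dg \<beta>) i j = (\<Sum>l<N. mmul N (dg \<alpha>) Q i l * dg \<beta> l j)"
    by (simp only: mmul_def[of N "mmul N (dg \<alpha>) Q"])
  also have "\<dots> = (\<Sum>l<N. if l = j then \<alpha> * Q i l * \<beta> else 0)"
    unfolding 1 by (rule sum.cong) (auto simp: dg_def)
  finally have "mmul N (mmul N (dg \<alpha>) Q) (dg \<beta>) i j = (\<Sum>l<N. if l = j then \<alpha> * Q i l * \<beta> else 0)" .
  thus ?thesis using assms by (simp add: 1)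
qed

context SAX begin

definition pidx :: "nat \<Rightarrow> nat" where "pidx mu = (if mu = 4 then 0 else mu)"

definition ecf :: "nat \<Rightarrow> nat \<Rightarrow> nat \<Rightarrow> nat \<Rightarrow> complex" where
  "ecf r u t mu = pcoef r mu * pauli (pidx mu) u t"

lemma pmat_eq: "pmat c x r u t = (\<Sum>mu\<in>{1..4}. c (ecf r u t mu) * x mu)"
  by (simp add: pmat_def ecf_def pidx_def)

lemma xsa: "mu \<in> {1..4} \<Longrightarrow> st (x mu) = x mu"
  using co unfolding coords_def by blast

lemma st_pmat: "st (pmat c x r u t) = (\<Sum>mu\<in>{1..4}. c (cnj (ecf r u t mu)) * x mu)"
proof -
  have "st (c (ecf r u t mu) * x mu) = c (cnj (ecf r u t mu)) * x mu" if "mu \<in> {1..4}" for mu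
    using xsa[OF that] by (simp add: st_mult st_c c_central)
  thus ?thesis by (simp add: pmat_eq st_sum)
qed

lemma Qm_eq: "msub mid (mmul k U (madj st U)) l1 l2 = (if l1 = l2 then 1 else 0) - (\<Sum>q<k. U l1 q * st (U l2 q))"
  by (simp add: msub_def mid_def mmul_def madj_def)

lemma asd_main: assumes "a < k" "b < k"
  shows "asd_block c st x n k U s t a b =
   (\<Sum>r<4. \<Sum>u<2. c (if r = 0 then -3 else 1) *
      (Bm (st (pmat c x r u s) * pmat c x r u t) a b
       - (\<Sum>q<k. Bm (st (pmat c x r u s)) a q * Bm (pmat c x r u t) q b)))" (is "_ = ?rhs")
proof -
  have "asd_block c st x n k U s t a b = T (\<lambda>l1 l2. \<Sum>r<4. \<Sum>u<2. c (if r = 0 then -3 else 1) *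
      mmul n (mmul n (dg (st (pmat c x r u s))) (msub mid (mmul k U (madj st U)))) (dg (pmat c x r u t)) l1 l2) a b"
    by (simp add: asd_block_def Let_def T_def mmul_def madj_def)
  also have "\<dots> = T (\<lambda>l1 l2. \<Sum>r<4. \<Sum>u<2. c (if r = 0 then -3 else 1) *
      (st (pmat c x r u s) * ((if l1 = l2 then 1 else 0) - (\<Sum>q<k. U l1 q * st (U l2 q))) * pmat c x r u t)) a b"
    by (rule T_cong) (simp add: dgQdg Qm_eq)
  also have "\<dots> = (\<Sum>r<4. \<Sum>u<2. c (if r = 0 then -3 else 1) *
      T (\<lambda>l1 l2. st (pmat c x r u s) * ((if l1 = l2 then 1 else 0) - (\<Sum>q<k. U l1 q * st (U l2 q))) * pmat c x r u t) a b)"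
    by (simp only: T_sum T_c)
  also have "\<dots> = ?rhs"
    by (simp only: T_sand[OF assms])
  finally show ?thesis .
qed

end

context SAX begin

definition ZZ :: "nat \<Rightarrow> nat \<Rightarrow> 'a mat" where
  "ZZ mu nu a b = Bm (x mu * x nu) a b - (\<Sum>q<k. Bm (x mu) a q * Bm (x nu) q b)"

lemma Bm_sum: "Bm (\<Sum>i\<in>S. f i) a b = (\<Sum>i\<in>S. Bm (f i) a b)"
proof -
  have "Bm (\<Sum>i\<in>S. f i) a b = (\<Sum>l<n. \<Sum>i\<in>S. st (U l a) * f i * U l b)"
    by (simp add: Bm_def sum_distrib_left sum_distrib_right)
  also have "\<dots> = (\<Sum>i\<in>S. \<Sum>l<n. st (U l a) * f i * U l b)" by (rule sum.swap)
  finally show ?thesis by (simp add: Bm_def)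
qed

lemma Bm_c: "Bm (c z * \<alpha>) a b = c z * Bm \<alpha> a b"
  by (simp add: Bm_def c_lc mult.assoc flip: sum_distrib_left)

lemma LB: "Bm ((\<Sum>mu\<in>S. c (zf mu) * x mu) * (\<Sum>nu\<in>S. c (gf nu) * x nu)) a b
   - (\<Sum>q<k. Bm (\<Sum>mu\<in>S. c (zf mu) * x mu) a q * Bm (\<Sum>nu\<in>S. c (gf nu) * x nu) q b)
   = (\<Sum>mu\<in>S. \<Sum>nu\<in>S. c (zf mu * gf nu) * ZZ mu nu a b)"
proof -
  have h1: "Bm ((\<Sum>mu\<in>S. c (zf mu) * x mu) * (\<Sum>nu\<in>S. c (gf nu) * x nu)) a b
      = (\<Sum>mu\<in>S. \<Sum>nu\<in>S. c (zf mu * gf nu) * Bm (x mu * x nu) a b)"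
    by (simp add: sum_product c_mm Bm_sum Bm_c)
  have h2: "(\<Sum>q<k. Bm (\<Sum>mu\<in>S. c (zf mu) * x mu) a q * Bm (\<Sum>nu\<in>S. c (gf nu) * x nu) q b)
      = (\<Sum>q<k. \<Sum>mu\<in>S. \<Sum>nu\<in>S. c (zf mu * gf nu) * (Bm (x mu) a q * Bm (x nu) q b))"
    by (simp add: sum_product c_mm Bm_sum Bm_c)
  also have "\<dots> = (\<Sum>mu\<in>S. \<Sum>q<k. \<Sum>nu\<in>S. c (zf mu * gf nu) * (Bm (x mu) a q * Bm (x nu) q b))"
    by (rule sum.swap)
  also have "\<dots> = (\<Sum>mu\<in>S. \<Sum>nu\<in>S. \<Sum>q<k. c (zf mu * gf nu) * (Bm (x mu) a q * Bm (x nu) q b))"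
    by (rule sum.cong[OF refl], rule sum.swap)
  also have "\<dots> = (\<Sum>mu\<in>S. \<Sum>nu\<in>S. c (zf mu * gf nu) * (\<Sum>q<k. Bm (x mu) a q * Bm (x nu) q b))"
    by (simp only: flip: sum_distrib_left)
  finally have h2': "(\<Sum>q<k. Bm (\<Sum>mu\<in>S. c (zf mu) * x mu) a q * Bm (\<Sum>nu\<in>S. c (gf nu) * x nu) q b)
      = (\<Sum>mu\<in>S. \<Sum>nu\<in>S. c (zf mu * gf nu) * (\<Sum>q<k. Bm (x mu) a q * Bm (x nu) q b))" .
  show ?thesis unfolding h1 h2' ZZ_def
    by (simp only: right_diff_distrib sum_subtractf)
qed


lemma swap4: "(\<Sum>r\<in>R. \<Sum>u\<in>V. \<Sum>mu\<in>M. \<Sum>nu\<in>N. F r u mu nu) = (\<Sum>mu\<in>M. \<Sum>nu\<in>N. \<Sum>r\<in>R. \<Sum>u\<in>V. F r u mu nu)"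
  for F :: "nat \<Rightarrow> nat \<Rightarrow> nat \<Rightarrow> nat \<Rightarrow> 'a"
proof -
  have "(\<Sum>r\<in>R. \<Sum>u\<in>V. \<Sum>mu\<in>M. \<Sum>nu\<in>N. F r u mu nu) = (\<Sum>r\<in>R. \<Sum>mu\<in>M. \<Sum>u\<in>V. \<Sum>nu\<in>N. F r u mu nu)"
    by (rule sum.cong[OF refl], rule sum.swap)
  also have "\<dots> = (\<Sum>mu\<in>M. \<Sum>r\<in>R. \<Sum>u\<in>V. \<Sum>nu\<in>N. F r u mu nu)" by (rule sum.swap)
  also have "\<dots> = (\<Sum>mu\<in>M. \<Sum>r\<in>R. \<Sum>nu\<in>N. \<Sum>u\<in>V. F r u mu nu)"
    by (rule sum.cong[OF refl], rule sum.cong[OF refl], rule sum.swap)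
  also have "\<dots> = (\<Sum>mu\<in>M. \<Sum>nu\<in>N. \<Sum>r\<in>R. \<Sum>u\<in>V. F r u mu nu)"
    by (rule sum.cong[OF refl], rule sum.swap)
  finally show ?thesis .
qed

definition Kf :: "nat \<Rightarrow> nat \<Rightarrow> nat \<Rightarrow> nat \<Rightarrow> complex" where
  "Kf s t mu nu = (\<Sum>r<4. \<Sum>u<2. (if r = 0 then -3 else 1) * (cnj (ecf r u s mu) * ecf r u t nu))"

lemma asd_K: assumes "a < k" "b < k"
  shows "asd_block c st x n k U s t a b = (\<Sum>mu\<in>{1..4}. \<Sum>nu\<in>{1..4}. c (Kf s t mu nu) * ZZ mu nu a b)"
proof -
  have "asd_block c st x n k U s t a b = (\<Sum>r<4. \<Sum>u<2. c (if r = 0 then -3 else 1) *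
     (\<Sum>mu\<in>{1..4}. \<Sum>nu\<in>{1..4}. c (cnj (ecf r u s mu) * ecf r u t nu) * ZZ mu nu a b))"
    unfolding asd_main[OF assms] st_pmat unfolding pmat_eq LB ..
  also have "\<dots> = (\<Sum>r<4. \<Sum>u<2. \<Sum>mu\<in>{1..4}. \<Sum>nu\<in>{1..4}.
      c ((if r = 0 then -3 else 1) * (cnj (ecf r u s mu) * ecf r u t nu)) * ZZ mu nu a b)"
    by (simp add: sum_distrib_left c_mult mult.assoc)
  also have "\<dots> = (\<Sum>mu\<in>{1..4}. \<Sum>nu\<in>{1..4}. \<Sum>r<4. \<Sum>u<2.
      c ((if r = 0 then -3 else 1) * (cnj (ecf r u s mu) * ecf r u t nu)) * ZZ mu nu a b)"
    by (rule swap4)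
  also have "\<dots> = (\<Sum>mu\<in>{1..4}. \<Sum>nu\<in>{1..4}. c (Kf s t mu nu) * ZZ mu nu a b)"
    by (simp add: Kf_def c_sum sum_distrib_right)
  finally show ?thesis .
qed

end

lemma s6: "sqrt 6 = sqrt 2 * sqrt 3" by (simp flip: real_sqrt_mult)
lemma s23: "sqrt (2/3) = sqrt 2 / sqrt 3" by (simp add: real_sqrt_divide)
lemma s2m: "sqrt 2 * (sqrt 2 * z) = 2 * (z::real)" by (simp flip: mult.assoc)
lemma s3m: "sqrt 3 * (sqrt 3 * z) = 3 * (z::real)" by (simp flip: mult.assoc)
context SAX begin
lemma K_0011: "Kf 0 0 1 1 = 0"
  by (simp add: Kf_def ecf_def pidx_def pauli_def numeral_eq_Suc pcoef_def s6 s23 complex_eq_iff field_simps s2m s3m)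
lemma K_0012: "Kf 0 0 1 2 = \<i>"
  by (simp add: Kf_def ecf_def pidx_def pauli_def numeral_eq_Suc pcoef_def s6 s23 complex_eq_iff field_simps s2m s3m)
lemma K_0013: "Kf 0 0 1 3 = 0"
  by (simp add: Kf_def ecf_def pidx_def pauli_def numeral_eq_Suc pcoef_def s6 s23 complex_eq_iff field_simps s2m s3m)
lemma K_0014: "Kf 0 0 1 4 = 0"
  by (simp add: Kf_def ecf_def pidx_def pauli_def numeral_eq_Suc pcoef_def s6 s23 complex_eq_iff field_simps s2m s3m)
lemma K_0021: "Kf 0 0 2 1 = - \<i>"
  by (simp add: Kf_def ecf_def pidx_def pauli_def numeral_eq_Suc pcoef_def s6 s23 complex_eq_iff field_simps s2m s3m)
lemma K_0022: "Kf 0 0 2 2 = 0"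
  by (simp add: Kf_def ecf_def pidx_def pauli_def numeral_eq_Suc pcoef_def s6 s23 complex_eq_iff field_simps s2m s3m)
lemma K_0023: "Kf 0 0 2 3 = 0"
  by (simp add: Kf_def ecf_def pidx_def pauli_def numeral_eq_Suc pcoef_def s6 s23 complex_eq_iff field_simps s2m s3m)
lemma K_0024: "Kf 0 0 2 4 = 0"
  by (simp add: Kf_def ecf_def pidx_def pauli_def numeral_eq_Suc pcoef_def s6 s23 complex_eq_iff field_simps s2m s3m)
lemma K_0031: "Kf 0 0 3 1 = 0"
  by (simp add: Kf_def ecf_def pidx_def pauli_def numeral_eq_Suc pcoef_def s6 s23 complex_eq_iff field_simps s2m s3m)
lemma K_0032: "Kf 0 0 3 2 = 0"
  by (simp add: Kf_def ecf_def pidx_def pauli_def numeral_eq_Suc pcoef_def s6 s23 complex_eq_iff field_simps s2m s3m)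
lemma K_0033: "Kf 0 0 3 3 = 0"
  by (simp add: Kf_def ecf_def pidx_def pauli_def numeral_eq_Suc pcoef_def s6 s23 complex_eq_iff field_simps s2m s3m)
lemma K_0034: "Kf 0 0 3 4 = \<i>"
  by (simp add: Kf_def ecf_def pidx_def pauli_def numeral_eq_Suc pcoef_def s6 s23 complex_eq_iff field_simps s2m s3m)
lemma K_0041: "Kf 0 0 4 1 = 0"
  by (simp add: Kf_def ecf_def pidx_def pauli_def numeral_eq_Suc pcoef_def s6 s23 complex_eq_iff field_simps s2m s3m)
lemma K_0042: "Kf 0 0 4 2 = 0"
  by (simp add: Kf_def ecf_def pidx_def pauli_def numeral_eq_Suc pcoef_def s6 s23 complex_eq_iff field_simps s2m s3m)
lemma K_0043: "Kf 0 0 4 3 = - \<i>"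
  by (simp add: Kf_def ecf_def pidx_def pauli_def numeral_eq_Suc pcoef_def s6 s23 complex_eq_iff field_simps s2m s3m)
lemma K_0044: "Kf 0 0 4 4 = 0"
  by (simp add: Kf_def ecf_def pidx_def pauli_def numeral_eq_Suc pcoef_def s6 s23 complex_eq_iff field_simps s2m s3m)
lemma K_0111: "Kf 0 1 1 1 = 0"
  by (simp add: Kf_def ecf_def pidx_def pauli_def numeral_eq_Suc pcoef_def s6 s23 complex_eq_iff field_simps s2m s3m)
lemma K_0112: "Kf 0 1 1 2 = 0"
  by (simp add: Kf_def ecf_def pidx_def pauli_def numeral_eq_Suc pcoef_def s6 s23 complex_eq_iff field_simps s2m s3m)
lemma K_0113: "Kf 0 1 1 3 = -1"
  by (simp add: Kf_def ecf_def pidx_def pauli_def numeral_eq_Suc pcoef_def s6 s23 complex_eq_iff field_simps s2m s3m)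
lemma K_0114: "Kf 0 1 1 4 = - \<i>"
  by (simp add: Kf_def ecf_def pidx_def pauli_def numeral_eq_Suc pcoef_def s6 s23 complex_eq_iff field_simps s2m s3m)
lemma K_0121: "Kf 0 1 2 1 = 0"
  by (simp add: Kf_def ecf_def pidx_def pauli_def numeral_eq_Suc pcoef_def s6 s23 complex_eq_iff field_simps s2m s3m)
lemma K_0122: "Kf 0 1 2 2 = 0"
  by (simp add: Kf_def ecf_def pidx_def pauli_def numeral_eq_Suc pcoef_def s6 s23 complex_eq_iff field_simps s2m s3m)
lemma K_0123: "Kf 0 1 2 3 = - \<i>"
  by (simp add: Kf_def ecf_def pidx_def pauli_def numeral_eq_Suc pcoef_def s6 s23 complex_eq_iff field_simps s2m s3m)
lemma K_0124: "Kf 0 1 2 4 = 1"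
  by (simp add: Kf_def ecf_def pidx_def pauli_def numeral_eq_Suc pcoef_def s6 s23 complex_eq_iff field_simps s2m s3m)
lemma K_0131: "Kf 0 1 3 1 = 1"
  by (simp add: Kf_def ecf_def pidx_def pauli_def numeral_eq_Suc pcoef_def s6 s23 complex_eq_iff field_simps s2m s3m)
lemma K_0132: "Kf 0 1 3 2 = \<i>"
  by (simp add: Kf_def ecf_def pidx_def pauli_def numeral_eq_Suc pcoef_def s6 s23 complex_eq_iff field_simps s2m s3m)
lemma K_0133: "Kf 0 1 3 3 = 0"
  by (simp add: Kf_def ecf_def pidx_def pauli_def numeral_eq_Suc pcoef_def s6 s23 complex_eq_iff field_simps s2m s3m)
lemma K_0134: "Kf 0 1 3 4 = 0"
  by (simp add: Kf_def ecf_def pidx_def pauli_def numeral_eq_Suc pcoef_def s6 s23 complex_eq_iff field_simps s2m s3m)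
lemma K_0141: "Kf 0 1 4 1 = \<i>"
  by (simp add: Kf_def ecf_def pidx_def pauli_def numeral_eq_Suc pcoef_def s6 s23 complex_eq_iff field_simps s2m s3m)
lemma K_0142: "Kf 0 1 4 2 = -1"
  by (simp add: Kf_def ecf_def pidx_def pauli_def numeral_eq_Suc pcoef_def s6 s23 complex_eq_iff field_simps s2m s3m)
lemma K_0143: "Kf 0 1 4 3 = 0"
  by (simp add: Kf_def ecf_def pidx_def pauli_def numeral_eq_Suc pcoef_def s6 s23 complex_eq_iff field_simps s2m s3m)
lemma K_0144: "Kf 0 1 4 4 = 0"
  by (simp add: Kf_def ecf_def pidx_def pauli_def numeral_eq_Suc pcoef_def s6 s23 complex_eq_iff field_simps s2m s3m)
lemma K_1011: "Kf 1 0 1 1 = 0"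
  by (simp add: Kf_def ecf_def pidx_def pauli_def numeral_eq_Suc pcoef_def s6 s23 complex_eq_iff field_simps s2m s3m)
lemma K_1012: "Kf 1 0 1 2 = 0"
  by (simp add: Kf_def ecf_def pidx_def pauli_def numeral_eq_Suc pcoef_def s6 s23 complex_eq_iff field_simps s2m s3m)
lemma K_1013: "Kf 1 0 1 3 = 1"
  by (simp add: Kf_def ecf_def pidx_def pauli_def numeral_eq_Suc pcoef_def s6 s23 complex_eq_iff field_simps s2m s3m)
lemma K_1014: "Kf 1 0 1 4 = - \<i>"
  by (simp add: Kf_def ecf_def pidx_def pauli_def numeral_eq_Suc pcoef_def s6 s23 complex_eq_iff field_simps s2m s3m)
lemma K_1021: "Kf 1 0 2 1 = 0"
  by (simp add: Kf_def ecf_def pidx_def pauli_def numeral_eq_Suc pcoef_def s6 s23 complex_eq_iff field_simps s2m s3m)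
lemma K_1022: "Kf 1 0 2 2 = 0"
  by (simp add: Kf_def ecf_def pidx_def pauli_def numeral_eq_Suc pcoef_def s6 s23 complex_eq_iff field_simps s2m s3m)
lemma K_1023: "Kf 1 0 2 3 = - \<i>"
  by (simp add: Kf_def ecf_def pidx_def pauli_def numeral_eq_Suc pcoef_def s6 s23 complex_eq_iff field_simps s2m s3m)
lemma K_1024: "Kf 1 0 2 4 = -1"
  by (simp add: Kf_def ecf_def pidx_def pauli_def numeral_eq_Suc pcoef_def s6 s23 complex_eq_iff field_simps s2m s3m)
lemma K_1031: "Kf 1 0 3 1 = -1"
  by (simp add: Kf_def ecf_def pidx_def pauli_def numeral_eq_Suc pcoef_def s6 s23 complex_eq_iff field_simps s2m s3m)
lemma K_1032: "Kf 1 0 3 2 = \<i>"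
  by (simp add: Kf_def ecf_def pidx_def pauli_def numeral_eq_Suc pcoef_def s6 s23 complex_eq_iff field_simps s2m s3m)
lemma K_1033: "Kf 1 0 3 3 = 0"
  by (simp add: Kf_def ecf_def pidx_def pauli_def numeral_eq_Suc pcoef_def s6 s23 complex_eq_iff field_simps s2m s3m)
lemma K_1034: "Kf 1 0 3 4 = 0"
  by (simp add: Kf_def ecf_def pidx_def pauli_def numeral_eq_Suc pcoef_def s6 s23 complex_eq_iff field_simps s2m s3m)
lemma K_1041: "Kf 1 0 4 1 = \<i>"
  by (simp add: Kf_def ecf_def pidx_def pauli_def numeral_eq_Suc pcoef_def s6 s23 complex_eq_iff field_simps s2m s3m)
lemma K_1042: "Kf 1 0 4 2 = 1"
  by (simp add: Kf_def ecf_def pidx_def pauli_def numeral_eq_Suc pcoef_def s6 s23 complex_eq_iff field_simps s2m s3m)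
lemma K_1043: "Kf 1 0 4 3 = 0"
  by (simp add: Kf_def ecf_def pidx_def pauli_def numeral_eq_Suc pcoef_def s6 s23 complex_eq_iff field_simps s2m s3m)
lemma K_1044: "Kf 1 0 4 4 = 0"
  by (simp add: Kf_def ecf_def pidx_def pauli_def numeral_eq_Suc pcoef_def s6 s23 complex_eq_iff field_simps s2m s3m)
lemma K_1111: "Kf 1 1 1 1 = 0"
  by (simp add: Kf_def ecf_def pidx_def pauli_def numeral_eq_Suc pcoef_def s6 s23 complex_eq_iff field_simps s2m s3m)
lemma K_1112: "Kf 1 1 1 2 = - \<i>"
  by (simp add: Kf_def ecf_def pidx_def pauli_def numeral_eq_Suc pcoef_def s6 s23 complex_eq_iff field_simps s2m s3m)
lemma K_1113: "Kf 1 1 1 3 = 0"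
  by (simp add: Kf_def ecf_def pidx_def pauli_def numeral_eq_Suc pcoef_def s6 s23 complex_eq_iff field_simps s2m s3m)
lemma K_1114: "Kf 1 1 1 4 = 0"
  by (simp add: Kf_def ecf_def pidx_def pauli_def numeral_eq_Suc pcoef_def s6 s23 complex_eq_iff field_simps s2m s3m)
lemma K_1121: "Kf 1 1 2 1 = \<i>"
  by (simp add: Kf_def ecf_def pidx_def pauli_def numeral_eq_Suc pcoef_def s6 s23 complex_eq_iff field_simps s2m s3m)
lemma K_1122: "Kf 1 1 2 2 = 0"
  by (simp add: Kf_def ecf_def pidx_def pauli_def numeral_eq_Suc pcoef_def s6 s23 complex_eq_iff field_simps s2m s3m)
lemma K_1123: "Kf 1 1 2 3 = 0"
  by (simp add: Kf_def ecf_def pidx_def pauli_def numeral_eq_Suc pcoef_def s6 s23 complex_eq_iff field_simps s2m s3m)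
lemma K_1124: "Kf 1 1 2 4 = 0"
  by (simp add: Kf_def ecf_def pidx_def pauli_def numeral_eq_Suc pcoef_def s6 s23 complex_eq_iff field_simps s2m s3m)
lemma K_1131: "Kf 1 1 3 1 = 0"
  by (simp add: Kf_def ecf_def pidx_def pauli_def numeral_eq_Suc pcoef_def s6 s23 complex_eq_iff field_simps s2m s3m)
lemma K_1132: "Kf 1 1 3 2 = 0"
  by (simp add: Kf_def ecf_def pidx_def pauli_def numeral_eq_Suc pcoef_def s6 s23 complex_eq_iff field_simps s2m s3m)
lemma K_1133: "Kf 1 1 3 3 = 0"
  by (simp add: Kf_def ecf_def pidx_def pauli_def numeral_eq_Suc pcoef_def s6 s23 complex_eq_iff field_simps s2m s3m)
lemma K_1134: "Kf 1 1 3 4 = - \<i>"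
  by (simp add: Kf_def ecf_def pidx_def pauli_def numeral_eq_Suc pcoef_def s6 s23 complex_eq_iff field_simps s2m s3m)
lemma K_1141: "Kf 1 1 4 1 = 0"
  by (simp add: Kf_def ecf_def pidx_def pauli_def numeral_eq_Suc pcoef_def s6 s23 complex_eq_iff field_simps s2m s3m)
lemma K_1142: "Kf 1 1 4 2 = 0"
  by (simp add: Kf_def ecf_def pidx_def pauli_def numeral_eq_Suc pcoef_def s6 s23 complex_eq_iff field_simps s2m s3m)
lemma K_1143: "Kf 1 1 4 3 = \<i>"
  by (simp add: Kf_def ecf_def pidx_def pauli_def numeral_eq_Suc pcoef_def s6 s23 complex_eq_iff field_simps s2m s3m)
lemma K_1144: "Kf 1 1 4 4 = 0"
  by (simp add: Kf_def ecf_def pidx_def pauli_def numeral_eq_Suc pcoef_def s6 s23 complex_eq_iff field_simps s2m s3m)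
end

context SAX begin

lemma Bm_diff: "Bm (\<alpha> - \<beta>) a b = Bm \<alpha> a b - Bm \<beta> a b"
  by (simp add: Bm_def algebra_simps sum_subtractf)

lemma ZZ_swap: "ZZ nu mu a b = ZZ mu nu a b - Bm (comm (x mu) (x nu)) a b + cmk (Bm (x mu)) (Bm (x nu)) a b"
  by (simp add: ZZ_def comm_def Bm_diff cmk_def sum_subtractf algebra_simps)

lemma Bm_cst: "a < k \<Longrightarrow> b < k \<Longrightarrow> Bm (c z) a b = (if a = b then c z else 0)"
  using Bm_c[of z 1 a b] orth[of a b] by (simp add: Bm_def)

lemma Bm_0: "Bm 0 a b = 0" by (simp add: Bm_def)

lemma cvals: "comm (x 1) (x 2) = c \<i>" "comm (x 3) (x 4) = c \<i>" "comm (x 1) (x 3) = 0"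
  "comm (x 1) (x 4) = 0" "comm (x 2) (x 3) = 0" "comm (x 2) (x 4) = 0"
  using co unfolding coords_def by auto

lemma sum14: "(\<Sum>mu\<in>{1..4::nat}. f mu) = f 1 + f 2 + f 3 + f 4"
proof -
  have "{1..4::nat} = {1,2,3,4}" by auto
  thus ?thesis by (simp add: add.assoc)
qed

definition C1 where "C1 a b = cmk (Bm (x 2)) (Bm (x 3)) a b + cmk (Bm (x 1)) (Bm (x 4)) a b"
definition C2 where "C2 a b = cmk (Bm (x 1)) (Bm (x 3)) a b - cmk (Bm (x 2)) (Bm (x 4)) a b"
definition C3 where "C3 a b = (if a = b then c \<i> + c \<i> else 0) - cmk (Bm (x 1)) (Bm (x 2)) a b - cmk (Bm (x 3)) (Bm (x 4)) a b"

lemmas Kvals = K_0011 K_0012 K_0013 K_0014 K_0021 K_0022 K_0023 K_0024 K_0031 K_0032 K_0033 K_0034 K_0041 K_0042 K_0043 K_0044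
  K_0111 K_0112 K_0113 K_0114 K_0121 K_0122 K_0123 K_0124 K_0131 K_0132 K_0133 K_0134 K_0141 K_0142 K_0143 K_0144
  K_1011 K_1012 K_1013 K_1014 K_1021 K_1022 K_1023 K_1024 K_1031 K_1032 K_1033 K_1034 K_1041 K_1042 K_1043 K_1044
  K_1111 K_1112 K_1113 K_1114 K_1121 K_1122 K_1123 K_1124 K_1131 K_1132 K_1133 K_1134 K_1141 K_1142 K_1143 K_1144

lemmas Zsw = ZZ_swap[of 2 1] ZZ_swap[of 3 1] ZZ_swap[of 4 1] ZZ_swap[of 3 2] ZZ_swap[of 4 2] ZZ_swap[of 4 3]

lemma asd00: assumes "a < k" "b < k" shows "asd_block c st x n k U 0 0 a b = c \<i> * C3 a b"
  unfolding asd_K[OF assms] sum14 Kvals Zsw cvals Bm_cst[OF assms] Bm_0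
  by (cases "a = b") (simp_all add: c_zero c_one cm1 c_neg cvals Bm_cst[OF assms] Bm_0 C3_def algebra_simps)

lemma asd01: assumes "a < k" "b < k" shows "asd_block c st x n k U 0 1 a b = c \<i> * C1 a b + C2 a b"
  unfolding asd_K[OF assms] sum14 Kvals Zsw cvals Bm_cst[OF assms] Bm_0
  by (cases "a = b") (simp_all add: c_zero c_one cm1 c_neg cvals Bm_cst[OF assms] Bm_0 C1_def C2_def algebra_simps)

lemma asd10: assumes "a < k" "b < k" shows "asd_block c st x n k U 1 0 a b = c \<i> * C1 a b - C2 a b"
  unfolding asd_K[OF assms] sum14 Kvals Zsw cvals Bm_cst[OF assms] Bm_0
  by (cases "a = b") (simp_all add: c_zero c_one cm1 c_neg cvals Bm_cst[OF assms] Bm_0 C1_def C2_def algebra_simps)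

lemma asd11: assumes "a < k" "b < k" shows "asd_block c st x n k U 1 1 a b = - (c \<i> * C3 a b)"
  unfolding asd_K[OF assms] sum14 Kvals Zsw cvals Bm_cst[OF assms] Bm_0
  by (cases "a = b") (simp_all add: c_zero c_one cm1 c_neg cvals Bm_cst[OF assms] Bm_0 C3_def algebra_simps)

end

context SAX begin

lemma Bm_neg_fun: "Bm (- \<alpha>) = (\<lambda>a b. - Bm \<alpha> a b)"
  by (rule ext, rule ext) (simp add: Bm_def sum_negf)

lemma cmk_negl: "cmk (\<lambda>a b. - A a b) B a b = - cmk A B a b"
  by (simp add: cmk_def sum_negf[symmetric] algebra_simps)
lemma cmk_negr: "cmk A (\<lambda>a b. - B a b) a b = - cmk A B a b"
  by (simp add: cmk_def sum_negf[symmetric] algebra_simps)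
lemma cmk_swap: "cmk B A a b = - cmk A B a b"
  by (simp add: cmk_def sum_negf[symmetric] algebra_simps)

lemma comm_negl: "comm (- a) b = - comm a b" by (simp add: comm_def)
lemma comm_negr: "comm a (- b) = - comm a b" by (simp add: comm_def)
lemma comm_swap: "comm b a = - comm a b" by (simp add: comm_def)

lemma yyv: "yy 1 = x 2" "yy 2 = - x 1" "yy 3 = x 4" "yy 4 = - x 3" by (simp_all add: yy_def)

lemma cmk_nn: "cmk (\<lambda>a b. - A a b) (\<lambda>a b. - B a b) a b = cmk A B a b"
  by (simp add: cmk_def)

lemma cu12: assumes "a < k" "b < k"
  shows "curv c st x n k U 1 2 a b = (if a = b then c \<i> else 0) - cmk (Bm (x 1)) (Bm (x 2)) a b"
proof -
  have e1: "comm (yy 1) (yy 2) = c \<i>" unfolding yyv comm_negr using cvals(1) comm_swap[of "x 2" "x 1"] by simp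
  have e2: "cmk (Bm (yy 1)) (Bm (yy 2)) a b = cmk (Bm (x 1)) (Bm (x 2)) a b"
    unfolding yyv Bm_neg_fun cmk_negr using cmk_swap[of "Bm (x 2)" "Bm (x 1)" a b] by simp
  show ?thesis unfolding curv_eq[OF assms] e1 e2 ..
qed

lemma cu34: assumes "a < k" "b < k"
  shows "curv c st x n k U 3 4 a b = (if a = b then c \<i> else 0) - cmk (Bm (x 3)) (Bm (x 4)) a b"
proof -
  have e1: "comm (yy 3) (yy 4) = c \<i>" unfolding yyv comm_negr using cvals(2) comm_swap[of "x 4" "x 3"] by simp
  have e2: "cmk (Bm (yy 3)) (Bm (yy 4)) a b = cmk (Bm (x 3)) (Bm (x 4)) a b"
    unfolding yyv Bm_neg_fun cmk_negr using cmk_swap[of "Bm (x 4)" "Bm (x 3)" a b] by simp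
  show ?thesis unfolding curv_eq[OF assms] e1 e2 ..
qed

lemma cu13: assumes "a < k" "b < k"
  shows "curv c st x n k U 1 3 a b = - cmk (Bm (x 2)) (Bm (x 4)) a b"
proof -
  have e1: "comm (yy 1) (yy 3) = 0" unfolding yyv using cvals(6) by simp
  show ?thesis unfolding curv_eq[OF assms] e1 unfolding yyv by simp
qed

lemma cu24: assumes "a < k" "b < k"
  shows "curv c st x n k U 2 4 a b = - cmk (Bm (x 1)) (Bm (x 3)) a b"
proof -
  have e1: "comm (yy 2) (yy 4) = 0" unfolding yyv comm_negr comm_negl using cvals(3) by simp
  show ?thesis unfolding curv_eq[OF assms] e1 unfolding yyv Bm_neg_fun cmk_nn by simp
qed

lemma cu14: assumes "a < k" "b < k"
  shows "curv c st x n k U 1 4 a b = cmk (Bm (x 2)) (Bm (x 3)) a b"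
proof -
  have e1: "comm (yy 1) (yy 4) = 0" unfolding yyv comm_negr using cvals(5) by simp
  show ?thesis unfolding curv_eq[OF assms] e1 unfolding yyv Bm_neg_fun cmk_negr by simp
qed

lemma cu23: assumes "a < k" "b < k"
  shows "curv c st x n k U 2 3 a b = cmk (Bm (x 1)) (Bm (x 4)) a b"
proof -
  have e1: "comm (yy 2) (yy 3) = 0" unfolding yyv comm_negl using cvals(4) by simp
  show ?thesis unfolding curv_eq[OF assms] e1 unfolding yyv Bm_neg_fun cmk_negl by simp
qed

lemma C3_curv: assumes "a < k" "b < k"
  shows "C3 a b = curv c st x n k U 1 2 a b + curv c st x n k U 3 4 a b"
  unfolding cu12[OF assms] cu34[OF assms] C3_def by (cases "a = b") (simp_all add: algebra_simps)

lemma C2_curv: assumes "a < k" "b < k"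
  shows "C2 a b = curv c st x n k U 1 3 a b - curv c st x n k U 2 4 a b"
  unfolding cu13[OF assms] cu24[OF assms] C2_def by (simp add: algebra_simps)

lemma C1_curv: assumes "a < k" "b < k"
  shows "C1 a b = curv c st x n k U 1 4 a b + curv c st x n k U 2 3 a b"
  unfolding cu14[OF assms] cu23[OF assms] C1_def by (simp add: algebra_simps)

lemma ci_cancel: fixes y :: 'a shows "c \<i> * y = 0 \<Longrightarrow> y = 0"
proof -
  assume h: "c \<i> * y = 0"
  have "y = - ((c \<i> * c \<i>) * y)" by (simp add: c_ii)
  also have "\<dots> = - (c \<i> * (c \<i> * y))" by (simp add: mult.assoc)
  finally show ?thesis using h by simp
qed

lemma two_cancel: fixes y :: 'a shows "y + y = 0 \<Longrightarrow> y = 0"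
proof -
  assume h: "y + y = 0"
  have "c (1/2) * y + c (1/2) * y = (c (1/2) + c (1/2)) * y" by (simp add: distrib_right)
  also have "\<dots> = c 1 * y" by (simp flip: c_add)
  finally have "y = c (1/2) * (y + y)" by (simp add: c_one distrib_left)
  thus ?thesis using h by simp
qed

lemma Lpart: "(meq k k (curv c st x n k U 1 2) (mneg (curv c st x n k U 3 4)) \<and>
          meq k k (curv c st x n k U 1 3) (curv c st x n k U 2 4) \<and>
          meq k k (curv c st x n k U 1 4) (mneg (curv c st x n k U 2 3)))
     \<longleftrightarrow> (\<forall>a<k. \<forall>b<k. C1 a b = 0 \<and> C2 a b = 0 \<and> C3 a b = 0)"
proof -
  have e: "(curv c st x n k U 1 2 a b = - curv c st x n k U 3 4 a b \<longleftrightarrow> C3 a b = 0)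
       \<and> (curv c st x n k U 1 3 a b = curv c st x n k U 2 4 a b \<longleftrightarrow> C2 a b = 0)
       \<and> (curv c st x n k U 1 4 a b = - curv c st x n k U 2 3 a b \<longleftrightarrow> C1 a b = 0)" if "a < k" "b < k" for a b
    unfolding C1_curv[OF that] C2_curv[OF that] C3_curv[OF that] eq_neg_iff_add_eq_0 by (simp only: eq_iff_diff_eq_0[of "curv c st x n k U 1 3 a b"])
  show ?thesis unfolding meq_def mneg_def using e by blast
qed


lemma Rpart: "(\<forall>s<2. \<forall>t<2. meq k k (asd_block c st x n k U s t) (\<lambda>i j. 0))
     \<longleftrightarrow> (\<forall>a<k. \<forall>b<k. c \<i> * C3 a b = 0 \<and> c \<i> * C1 a b + C2 a b = 0 \<and> c \<i> * C1 a b - C2 a b = 0)"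
proof -
  have Q: "(\<forall>s<(2::nat). \<forall>t<(2::nat). P s t) \<longleftrightarrow> P 0 0 \<and> P 0 1 \<and> P 1 0 \<and> P 1 1" for P
    by (auto simp: less_2_cases_iff)
  have "(\<forall>s<2. \<forall>t<2. meq k k (asd_block c st x n k U s t) (\<lambda>i j. 0))
     \<longleftrightarrow> (\<forall>a<k. \<forall>b<k. asd_block c st x n k U 0 0 a b = 0 \<and> asd_block c st x n k U 0 1 a b = 0
          \<and> asd_block c st x n k U 1 0 a b = 0 \<and> asd_block c st x n k U 1 1 a b = 0)"
    unfolding Q meq_def by blast
  also have "\<dots> \<longleftrightarrow> (\<forall>a<k. \<forall>b<k. c \<i> * C3 a b = 0 \<and> c \<i> * C1 a b + C2 a b = 0 \<and> c \<i> * C1 a b - C2 a b = 0)"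
  proof -
    have pt: "(asd_block c st x n k U 0 0 a b = 0 \<and> asd_block c st x n k U 0 1 a b = 0
          \<and> asd_block c st x n k U 1 0 a b = 0 \<and> asd_block c st x n k U 1 1 a b = 0)
       \<longleftrightarrow> (c \<i> * C3 a b = 0 \<and> c \<i> * C1 a b + C2 a b = 0 \<and> c \<i> * C1 a b - C2 a b = 0)"
      if "a < k" "b < k" for a b
      unfolding asd00[OF that] asd01[OF that] asd10[OF that] asd11[OF that] neg_equal_0_iff_equal by blast
    show ?thesis using pt by blast
  qed
  finally show ?thesis .
qed

lemma Epart: "(c \<i> * C3 a b = 0 \<and> c \<i> * C1 a b + C2 a b = 0 \<and> c \<i> * C1 a b - C2 a b = 0)
     \<longleftrightarrow> (C1 a b = 0 \<and> C2 a b = 0 \<and> C3 a b = 0)"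
proof
  assume h: "c \<i> * C3 a b = 0 \<and> c \<i> * C1 a b + C2 a b = 0 \<and> c \<i> * C1 a b - C2 a b = 0"
  have "C2 a b + C2 a b = (c \<i> * C1 a b + C2 a b) - (c \<i> * C1 a b - C2 a b)" by simp
  also have "\<dots> = 0 - 0" using h by (intro arg_cong2[where f="(-)"]) blast+
  also have "\<dots> = 0" by simp
  finally have c2: "C2 a b = 0" by (rule two_cancel)
  have "c \<i> * C1 a b = 0" using h c2 by simp
  hence c1: "C1 a b = 0" by (rule ci_cancel)
  have "c \<i> * C3 a b = 0" using h by blast
  hence c3: "C3 a b = 0" by (rule ci_cancel)
  show "C1 a b = 0 \<and> C2 a b = 0 \<and> C3 a b = 0" using c1 c2 c3 by simp
next
  assume "C1 a b = 0 \<and> C2 a b = 0 \<and> C3 a b = 0"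
  thus "c \<i> * C3 a b = 0 \<and> c \<i> * C1 a b + C2 a b = 0 \<and> c \<i> * C1 a b - C2 a b = 0" by simp
qed

lemma main: "(meq k k (curv c st x n k U 1 2) (mneg (curv c st x n k U 3 4)) \<and>
          meq k k (curv c st x n k U 1 3) (curv c st x n k U 2 4) \<and>
          meq k k (curv c st x n k U 1 4) (mneg (curv c st x n k U 2 3)))
         \<longleftrightarrow> (\<forall>s<2. \<forall>t<2. meq k k (asd_block c st x n k U s t) (\<lambda>i j. 0))"
  unfolding Lpart Rpart Epart ..

end


theorem mainTheorem4:
  fixes c :: "complex \<Rightarrow> 'a::ring_1" and st :: "'a \<Rightarrow> 'a" and x :: "nat \<Rightarrow> 'a"
    and U :: "'a mat" and n k :: nat
  assumes "star_alg c st"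
    and "coords c st x"
    and "meq k k (mmul n (madj st U) U) mid"
  shows "(meq k k (curv c st x n k U 1 2) (mneg (curv c st x n k U 3 4)) \<and>
          meq k k (curv c st x n k U 1 3) (curv c st x n k U 2 4) \<and>
          meq k k (curv c st x n k U 1 4) (mneg (curv c st x n k U 2 3)))
         \<longleftrightarrow> (\<forall>s<2. \<forall>t<2. meq k k (asd_block c st x n k U s t) (\<lambda>i j. 0))"
proof -
  interpret SAX c st x n k U
    by (intro SAX.intro SA.intro SAX_axioms.intro assms)
  show ?thesis by (rule main)
qed

end
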